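(* Let $n>1$, $c>0$ and $\rho>0$. Let $(\mathfrak{l},g_\rho^c)$ be the metric Lie algebra described in the context. Then $(\mathfrak{l},g_\rho^c)$ is not a solvsoliton: there are no $\lambda\in\mathbb{R}$ and derivation $D$ of $\mathfrak{l}$ such that the Ricci endomorphism of the left-invariant metric defined by $g_\rho^c$ on the simply connected Lie group with Lie algebra $\mathfrak{l}$ equals $\lambda\,\mathrm{Id}+D$.
   Context: Fix $n\ge 2$, $\rho>0$, $c\ge 0$. The real Lie algebra $\mathfrak{l}$ has basis $B_a^R,B_a^I$ ($a=1,\dots,n-1$), $e_k,f_k$ ($k=0,\dots,n-1$), $Z$. Its brackets are as follows (all brackets of basis elements not listed, up to antisymmetry, are zero). On $\mathfrak{b}=\mathrm{span}\{B_a^R,B_a^I\}$: $[B_1^R,B_1^I]=2B_1^I$, and for $a\in\{2,\dots,n-1\}$: $[B_1^R,B_a^R]=B_a^R$, $[B_1^R,B_a^I]=B_a^I$, $[B_a^R,B_a^I]=\tfrac12 B_1^I$. On $\mathfrak{heis}_{2n+1}=\mathrm{span}\{e_k,f_k,Z\}$: $[e_0,f_0]=Z$, $[e_a,f_a]=-Z$ for $a\ge 1$. Also $[\mathfrak{b},Z]=0$. The mixed brackets are described after complex-bilinear extension, with $E_k:=e_k-if_k$ and $[B,\bar E_k]=\overline{[B,E_k]}$ for $B\in\mathfrak{b}$ real: for $k=0,\dots,n-1$ and $a\in\{2,\dots,n-1\}$, $[B_1^R,E_k]=-\delta_{k0}E_1-\delta_{k1}E_0$, $[B_a^R,E_k]=-\tfrac12(\delta_{k0}+\delta_{k1})E_a-\tfrac12\delta_{ka}(E_0-E_1)$,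 $[B_1^I,E_k]=-i(\delta_{k0}+\delta_{k1})(E_0-E_1)$, $[B_a^I,E_k]=\tfrac{i}{2}(\delta_{k0}+\delta_{k1})E_a-\tfrac{i}{2}\delta_{ka}(E_0-E_1)$. The inner product $g_\rho^c$ on $\mathfrak{l}$ is given by $g(B_1^R,B_1^R)=\frac{\rho+c}{\rho}$, $g(B_1^I,B_1^I)=\frac{(\rho+c)^3}{\rho^2(\rho+2c)}$, $g(B_a^R,B_a^R)=g(B_a^I,B_a^I)=\frac{\rho+c}{4\rho}$ ($a\ge2$), $g(e_0,e_0)=g(f_0,f_0)=\frac{\rho+2c}{4\rho^2}$, $g(e_a,e_a)=g(f_a,f_a)=\frac{1}{4\rho}$ ($a\ge1$), $g(Z,Z)=\frac{\rho+c}{4\rho^2(\rho+2c)}$, $g(B_1^I,Z)=-\frac{c(\rho+c)}{2\rho^2(\rho+2c)}$, and all other pairs of distinct basis vectors orthogonal. This is the left-invariant metric on the group $L$ with Lie algebra $\mathfrak{l}$ corresponding to the metric induced on the level sets (orbits of a cohomogeneity one action) of the one-loop deformation with parameter $c$ of the quaternionic Kähler symmetric space $\mathrm{SU}(n,2)/\mathrm{S}(\mathrm{U}(n)\times\mathrm{U}(2))$. A left-invariant metric on a simply connected solvable Lie group is a solvsoliton if $\mathrm{ric}=\lambda\mathrm{Id}+D$ with $\lambda\in\mathbb{R}$ and $D$ a derivation of the Lie algebra. *)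

theory Defs
  imports Complex_Main
begin

text \<open>A finite-dimensional real Lie algebra with basis indexed by a finite set S
 (elements of type 'b); vectors are coordinate functions 'b => real (only coordinates
 in S matter). C i j k is the coefficient of basis vector k in [b_i, b_j];
 G i j is the Gram matrix of the inner product.\<close>

definition bvec :: "'b \<Rightarrow> 'b \<Rightarrow> real" where
  "bvec i = (\<lambda>k. if k = i then 1 else 0)"

definition vbr :: "'b set \<Rightarrow> ('b \<Rightarrow> 'b \<Rightarrow> 'b \<Rightarrow> real) \<Rightarrow> ('b \<Rightarrow> real) \<Rightarrow> ('b \<Rightarrow> real) \<Rightarrow> ('b \<Rightarrow> real)" where
  "vbr S C v w = (\<lambda>k. if k \<in> S then (\<Sum>i\<in>S. \<Sum>j\<in>S. v i * w j * C i j k) else 0)"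

definition ginner :: "'b set \<Rightarrow> ('b \<Rightarrow> 'b \<Rightarrow> real) \<Rightarrow> ('b \<Rightarrow> real) \<Rightarrow> ('b \<Rightarrow> real) \<Rightarrow> real" where
  "ginner S G v w = (\<Sum>i\<in>S. \<Sum>j\<in>S. v i * G i j * w j)"

text \<open>Levi-Civita connection on left-invariant vector fields (Koszul formula):
 2 g(nabla_X Y, Z) = g([X,Y],Z) - g([Y,Z],X) + g([Z,X],Y).\<close>
definition lc :: "'b set \<Rightarrow> ('b \<Rightarrow> 'b \<Rightarrow> 'b \<Rightarrow> real) \<Rightarrow> ('b \<Rightarrow> 'b \<Rightarrow> real) \<Rightarrow> ('b \<Rightarrow> real) \<Rightarrow> ('b \<Rightarrow> real) \<Rightarrow> ('b \<Rightarrow> real)" where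
  "lc S C G X Y = (THE W. (\<forall>k. k \<notin> S \<longrightarrow> W k = 0) \<and>
     (\<forall>Z. 2 * ginner S G W Z = ginner S G (vbr S C X Y) Z - ginner S G (vbr S C Y Z) X
                                 + ginner S G (vbr S C Z X) Y))"

definition curv :: "'b set \<Rightarrow> ('b \<Rightarrow> 'b \<Rightarrow> 'b \<Rightarrow> real) \<Rightarrow> ('b \<Rightarrow> 'b \<Rightarrow> real) \<Rightarrow> ('b \<Rightarrow> real) \<Rightarrow> ('b \<Rightarrow> real) \<Rightarrow> ('b \<Rightarrow> real) \<Rightarrow> ('b \<Rightarrow> real)" where
  "curv S C G X Y Z = (\<lambda>k. lc S C G X (lc S C G Y Z) k - lc S C G Y (lc S C G X Z) k
                          - lc S C G (vbr S C X Y) Z k)"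

definition ricci :: "'b set \<Rightarrow> ('b \<Rightarrow> 'b \<Rightarrow> 'b \<Rightarrow> real) \<Rightarrow> ('b \<Rightarrow> 'b \<Rightarrow> real) \<Rightarrow> ('b \<Rightarrow> real) \<Rightarrow> ('b \<Rightarrow> real) \<Rightarrow> real" where
  "ricci S C G Y Z = (\<Sum>i\<in>S. curv S C G (bvec i) Y Z i)"

definition mapply :: "'b set \<Rightarrow> ('b \<Rightarrow> 'b \<Rightarrow> real) \<Rightarrow> ('b \<Rightarrow> real) \<Rightarrow> ('b \<Rightarrow> real)" where
  "mapply S M v = (\<lambda>k. if k \<in> S then (\<Sum>j\<in>S. M k j * v j) else 0)"

definition is_derivation :: "'b set \<Rightarrow> ('b \<Rightarrow> 'b \<Rightarrow> 'b \<Rightarrow> real) \<Rightarrow> ('b \<Rightarrow> 'b \<Rightarrow> real) \<Rightarrow> bool" where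
  "is_derivation S C M \<longleftrightarrow> (\<forall>X Y. mapply S M (vbr S C X Y) =
      (\<lambda>k. vbr S C (mapply S M X) Y k + vbr S C X (mapply S M Y) k))"

text \<open>Solvsoliton: Ric = lambda Id + D with D a derivation; the Ricci endomorphism Ric is
 defined by g(Ric X, Y) = ric(X, Y), so the condition reads
 ric(X,Y) = lambda g(X,Y) + g(D X, Y) for all X, Y.\<close>
definition solvsoliton :: "'b set \<Rightarrow> ('b \<Rightarrow> 'b \<Rightarrow> 'b \<Rightarrow> real) \<Rightarrow> ('b \<Rightarrow> 'b \<Rightarrow> real) \<Rightarrow> bool" where
  "solvsoliton S C G \<longleftrightarrow> (\<exists>(lam::real) M. is_derivation S C M \<and>
     (\<forall>X Y. ricci S C G X Y = lam * ginner S G X Y + ginner S G (mapply S M X) Y))"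

datatype lb = BR nat | BI nat | Ee nat | Ff nat | Zb

definition lset :: "nat \<Rightarrow> lb set" where
  "lset n = BR ` {1..n-1} \<union> BI ` {1..n-1} \<union> Ee ` {0..n-1} \<union> Ff ` {0..n-1} \<union> {Zb}"

definition dl :: "nat \<Rightarrow> nat \<Rightarrow> complex" where
  "dl x y = (if x = y then 1 else 0)"

text \<open>alpha B k m: coefficient of E_m in [B, E_k] (complexified), E_k = e_k - i f_k.\<close>
fun alpha :: "lb \<Rightarrow> nat \<Rightarrow> nat \<Rightarrow> complex" where
  "alpha (BR a) k m = (if a = 1 then - (dl k 0 * dl m 1 + dl k 1 * dl m 0)
      else - (1/2) * (dl k 0 + dl k 1) * dl m a - (1/2) * dl k a * (dl m 0 - dl m 1))"
| "alpha (BI a) k m = (if a = 1 then - \<i> * (dl k 0 + dl k 1) * (dl m 0 - dl m 1)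
      else (\<i>/2) * (dl k 0 + dl k 1) * dl m a - (\<i>/2) * dl k a * (dl m 0 - dl m 1))"
| "alpha _ k m = 0"

text \<open>Listed brackets (one ordering of each pair). Writing alpha = a + i b,
 [B, e_k] has e_m-component a and f_m-component b, [B, f_k] has e_m-component -b
 and f_m-component a.\<close>
definition lup :: "lb \<Rightarrow> lb \<Rightarrow> lb \<Rightarrow> real" where
  "lup x y t = (case (x, y) of
     (BR a, BR b) \<Rightarrow> (if a = 1 \<and> 2 \<le> b then (if t = BR b then 1 else 0) else 0)
   | (BR a, BI b) \<Rightarrow> (if a = 1 \<and> b = 1 then (if t = BI 1 then 2 else 0)
                     else if a = 1 \<and> 2 \<le> b then (if t = BI b then 1 else 0)
                     else if 2 \<le> a \<and> a = b then (if t = BI 1 then 1/2 else 0)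
                     else 0)
   | (Ee a, Ff b) \<Rightarrow> (if a = b \<and> t = Zb then (if a = 0 then 1 else -1) else 0)
   | (BR _, Ee k) \<Rightarrow> (case t of Ee m \<Rightarrow> Re (alpha x k m) | Ff m \<Rightarrow> Im (alpha x k m) | _ \<Rightarrow> 0)
   | (BI _, Ee k) \<Rightarrow> (case t of Ee m \<Rightarrow> Re (alpha x k m) | Ff m \<Rightarrow> Im (alpha x k m) | _ \<Rightarrow> 0)
   | (BR _, Ff k) \<Rightarrow> (case t of Ee m \<Rightarrow> - Im (alpha x k m) | Ff m \<Rightarrow> Re (alpha x k m) | _ \<Rightarrow> 0)
   | (BI _, Ff k) \<Rightarrow> (case t of Ee m \<Rightarrow> - Im (alpha x k m) | Ff m \<Rightarrow> Re (alpha x k m) | _ \<Rightarrow> 0)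
   | _ \<Rightarrow> 0)"

definition lC :: "lb \<Rightarrow> lb \<Rightarrow> lb \<Rightarrow> real" where
  "lC x y t = lup x y t - lup y x t"

definition lG :: "real \<Rightarrow> real \<Rightarrow> lb \<Rightarrow> lb \<Rightarrow> real" where
  "lG \<rho> c x y = (case (x, y) of
     (BR a, BR b) \<Rightarrow> (if a = b then (if a = 1 then (\<rho> + c) / \<rho> else (\<rho> + c) / (4 * \<rho>)) else 0)
   | (BI a, BI b) \<Rightarrow> (if a = b then (if a = 1 then (\<rho> + c)^3 / (\<rho>^2 * (\<rho> + 2*c))
                                    else (\<rho> + c) / (4 * \<rho>)) else 0)
   | (Ee a, Ee b) \<Rightarrow> (if a = b then (if a = 0 then (\<rho> + 2*c) / (4 * \<rho>^2) else 1 / (4 * \<rho>)) else 0)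
   | (Ff a, Ff b) \<Rightarrow> (if a = b then (if a = 0 then (\<rho> + 2*c) / (4 * \<rho>^2) else 1 / (4 * \<rho>)) else 0)
   | (Zb, Zb) \<Rightarrow> (\<rho> + c) / (4 * \<rho>^2 * (\<rho> + 2*c))
   | (BI a, Zb) \<Rightarrow> (if a = 1 then - (c * (\<rho> + c)) / (2 * \<rho>^2 * (\<rho> + 2*c)) else 0)
   | (Zb, BI a) \<Rightarrow> (if a = 1 then - (c * (\<rho> + c)) / (2 * \<rho>^2 * (\<rho> + 2*c)) else 0)
   | _ \<Rightarrow> 0)"

end

theory Submission
  imports Defs
begin


definition Kz :: "'b set \<Rightarrow> ('b \<Rightarrow> 'b \<Rightarrow> 'b \<Rightarrow> real) \<Rightarrow> ('b \<Rightarrow> 'b \<Rightarrow> real) \<Rightarrow> ('b \<Rightarrow> real) \<Rightarrow> ('b \<Rightarrow> real) \<Rightarrow> ('b \<Rightarrow> real) \<Rightarrow> real" where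
  "Kz S C G X Y Z = ginner S G (vbr S C X Y) Z - ginner S G (vbr S C Y Z) X + ginner S G (vbr S C Z X) Y"

lemma sum_delta_r: "finite S \<Longrightarrow> (\<Sum>j\<in>S. f j * (if j = r then 1 else 0)) = (if r \<in> S then f r else (0::real))"
proof -
  have "\<And>j. f j * (if j = r then 1 else 0) = (if r = j then f r else 0)" by auto
  moreover assume "finite S"
  ultimately show ?thesis by (simp add: sum.delta)
qed

lemma sum_delta_l: "finite S \<Longrightarrow> (\<Sum>j\<in>S. (if j = r then 1 else 0) * f j) = (if r \<in> S then f r else (0::real))"
proof -
  have "\<And>j. (if j = r then 1 else 0) * f j = (if r = j then f r else 0)" by auto
  moreover assume "finite S"
  ultimately show ?thesis by (simp add: sum.delta)
qed

lemma if0_mult: "(if P then x else 0) * y = (if P then x * y else (0::real))" by simp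
lemma mult_if0: "y * (if P then x else 0) = (if P then y * x else (0::real))" by simp
lemma sum_if_const: "(\<Sum>j\<in>A. if P then f j else 0) = (if P then sum f A else (0::real))" by auto
lemmas delta_simps = if0_mult mult_if0 sum.delta sum.delta' sum_if_const

lemma ginner_bvec_r: "r \<in> S \<Longrightarrow> finite S \<Longrightarrow> ginner S G V (bvec r) = (\<Sum>i\<in>S. V i * G i r)"
  unfolding ginner_def bvec_def
  by (simp add: delta_simps)

lemma ginner_bvec_l: "r \<in> S \<Longrightarrow> finite S \<Longrightarrow> ginner S G (bvec r) V = (\<Sum>j\<in>S. G r j * V j)"
  unfolding ginner_def bvec_def
  by (simp add: delta_simps sum_distrib_left)

lemma ginner_right: assumes "finite S"
  shows "ginner S G V Z = (\<Sum>r\<in>S. Z r * ginner S G V (bvec r))"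
proof -
  have "(\<Sum>r\<in>S. Z r * ginner S G V (bvec r)) = (\<Sum>r\<in>S. Z r * (\<Sum>i\<in>S. V i * G i r))"
    using assms by (intro sum.cong) (auto simp: ginner_bvec_r)
  also have "\<dots> = (\<Sum>r\<in>S. \<Sum>i\<in>S. V i * G i r * Z r)"
    by (simp add: sum_distrib_left mult_ac)
  also have "\<dots> = ginner S G V Z"
    unfolding ginner_def by (rule sum.swap)
  finally show ?thesis by simp
qed

lemma ginner_left: assumes "finite S"
  shows "ginner S G Z V = (\<Sum>r\<in>S. Z r * ginner S G (bvec r) V)"
proof -
  have "(\<Sum>r\<in>S. Z r * ginner S G (bvec r) V) = (\<Sum>r\<in>S. Z r * (\<Sum>j\<in>S. G r j * V j))"
    using assms by (intro sum.cong) (auto simp: ginner_bvec_l)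
  also have "\<dots> = ginner S G Z V"
    unfolding ginner_def by (simp add: sum_distrib_left mult_ac)
  finally show ?thesis by simp
qed

lemma vbr_right: assumes "finite S"
  shows "vbr S C Y Z = (\<lambda>k. \<Sum>r\<in>S. Z r * vbr S C Y (bvec r) k)"
proof
  fix k
  show "vbr S C Y Z k = (\<Sum>r\<in>S. Z r * vbr S C Y (bvec r) k)"
  proof (cases "k \<in> S")
    case True
    have "(\<Sum>r\<in>S. Z r * vbr S C Y (bvec r) k) = (\<Sum>r\<in>S. Z r * (\<Sum>i\<in>S. Y i * C i r k))"
      using assms True by (intro sum.cong) (auto simp: vbr_def bvec_def delta_simps)
    also have "\<dots> = (\<Sum>i\<in>S. \<Sum>r\<in>S. Y i * Z r * C i r k)"
      by (subst sum.swap) (simp add: sum_distrib_left mult_ac)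
    finally show ?thesis using True by (simp add: vbr_def)
  qed (simp add: vbr_def)
qed

lemma vbr_left: assumes "finite S"
  shows "vbr S C Z Y = (\<lambda>k. \<Sum>r\<in>S. Z r * vbr S C (bvec r) Y k)"
proof
  fix k
  show "vbr S C Z Y k = (\<Sum>r\<in>S. Z r * vbr S C (bvec r) Y k)"
  proof (cases "k \<in> S")
    case True
    have "(\<Sum>r\<in>S. Z r * vbr S C (bvec r) Y k) = (\<Sum>r\<in>S. Z r * (\<Sum>j\<in>S. Y j * C r j k))"
      using assms True by (intro sum.cong) (auto simp: vbr_def bvec_def delta_simps)
    also have "\<dots> = (\<Sum>r\<in>S. \<Sum>j\<in>S. Z r * Y j * C r j k)"
      by (simp add: sum_distrib_left mult_ac)
    finally show ?thesis using True by (simp add: vbr_def)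
  qed (simp add: vbr_def)
qed

lemma ginner_sum_l: assumes "finite S"
  shows "ginner S G (\<lambda>k. \<Sum>r\<in>S. Z r * F r k) V = (\<Sum>r\<in>S. Z r * ginner S G (F r) V)"
proof -
  have "ginner S G (\<lambda>k. \<Sum>r\<in>S. Z r * F r k) V = (\<Sum>i\<in>S. \<Sum>j\<in>S. \<Sum>r\<in>S. Z r * F r i * G i j * V j)"
    unfolding ginner_def by (simp add: sum_distrib_right)
  also have "\<dots> = (\<Sum>i\<in>S. \<Sum>r\<in>S. \<Sum>j\<in>S. Z r * F r i * G i j * V j)"
    by (rule sum.cong[OF refl], rule sum.swap)
  also have "\<dots> = (\<Sum>r\<in>S. \<Sum>i\<in>S. \<Sum>j\<in>S. Z r * F r i * G i j * V j)"
    by (rule sum.swap)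
  also have "\<dots> = (\<Sum>r\<in>S. Z r * ginner S G (F r) V)"
    unfolding ginner_def by (simp add: sum_distrib_left mult.assoc)
  finally show ?thesis .
qed

lemma Kz_right: assumes "finite S"
  shows "Kz S C G X Y Z = (\<Sum>r\<in>S. Z r * Kz S C G X Y (bvec r))"
proof -
  have 1: "ginner S G (vbr S C X Y) Z = (\<Sum>r\<in>S. Z r * ginner S G (vbr S C X Y) (bvec r))"
    by (rule ginner_right[OF assms])
  have 2: "ginner S G (vbr S C Y Z) X = (\<Sum>r\<in>S. Z r * ginner S G (vbr S C Y (bvec r)) X)"
    by (subst vbr_right[OF assms]) (rule ginner_sum_l[OF assms])
  have 3: "ginner S G (vbr S C Z X) Y = (\<Sum>r\<in>S. Z r * ginner S G (vbr S C (bvec r) X) Y)"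
    by (subst vbr_left[OF assms]) (rule ginner_sum_l[OF assms])
  show ?thesis unfolding Kz_def 1 2 3
    by (simp add: sum_subtractf[symmetric] sum.distrib[symmetric] algebra_simps)
qed

lemma Kz_left: assumes "finite S"
  shows "Kz S C G X Y Z = (\<Sum>r\<in>S. X r * Kz S C G (bvec r) Y Z)"
proof -
  have 1: "ginner S G (vbr S C X Y) Z = (\<Sum>r\<in>S. X r * ginner S G (vbr S C (bvec r) Y) Z)"
    by (subst vbr_left[OF assms]) (rule ginner_sum_l[OF assms])
  have 2: "ginner S G (vbr S C Y Z) X = (\<Sum>r\<in>S. X r * ginner S G (vbr S C Y Z) (bvec r))"
    by (rule ginner_right[OF assms])
  have 3: "ginner S G (vbr S C Z X) Y = (\<Sum>r\<in>S. X r * ginner S G (vbr S C Z (bvec r)) Y)"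
    by (subst vbr_right[OF assms]) (rule ginner_sum_l[OF assms])
  show ?thesis unfolding Kz_def 1 2 3
    by (simp add: sum_subtractf[symmetric] sum.distrib[symmetric] algebra_simps)
qed

lemma Kz_mid: assumes "finite S"
  shows "Kz S C G X Y Z = (\<Sum>r\<in>S. Y r * Kz S C G X (bvec r) Z)"
proof -
  have 1: "ginner S G (vbr S C X Y) Z = (\<Sum>r\<in>S. Y r * ginner S G (vbr S C X (bvec r)) Z)"
    by (subst vbr_right[OF assms]) (rule ginner_sum_l[OF assms])
  have 2: "ginner S G (vbr S C Y Z) X = (\<Sum>r\<in>S. Y r * ginner S G (vbr S C (bvec r) Z) X)"
    by (subst vbr_left[OF assms]) (rule ginner_sum_l[OF assms])
  have 3: "ginner S G (vbr S C Z X) Y = (\<Sum>r\<in>S. Y r * ginner S G (vbr S C Z X) (bvec r))"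
    by (rule ginner_right[OF assms])
  show ?thesis unfolding Kz_def 1 2 3
    by (simp add: sum_subtractf[symmetric] sum.distrib[symmetric] algebra_simps)
qed

definition lcH where
  "lcH S C G H X Y = (\<lambda>k. if k \<in> S then (\<Sum>r\<in>S. H k r * Kz S C G X Y (bvec r)) / 2 else 0)"

lemma lc_formula:
  assumes fin: "finite S"
    and Gsym: "\<And>i j. i \<in> S \<Longrightarrow> j \<in> S \<Longrightarrow> G i j = G j i"
    and Hsym: "\<And>i j. i \<in> S \<Longrightarrow> j \<in> S \<Longrightarrow> H i j = H j i"
    and inv: "\<And>i k. i \<in> S \<Longrightarrow> k \<in> S \<Longrightarrow> (\<Sum>j\<in>S. G i j * H j k) = (if i = k then 1 else 0)"
  shows "lc S C G X Y = lcH S C G H X Y"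
proof -
  define W where "W = lcH S C G H X Y"
  have inv2: "(\<Sum>i\<in>S. H i r * G i s) = (if r = s then 1 else 0)" if "r \<in> S" "s \<in> S" for r s
  proof -
    have "(\<Sum>i\<in>S. H i r * G i s) = (\<Sum>i\<in>S. G s i * H i r)"
      using that by (intro sum.cong) (auto simp: Gsym Hsym mult.commute)
    also have "\<dots> = (if s = r then 1 else 0)" using inv that by simp
    finally show ?thesis by auto
  qed
  have Wb: "ginner S G W (bvec s) = Kz S C G X Y (bvec s) / 2" if "s \<in> S" for s
  proof -
    have "ginner S G W (bvec s) = (\<Sum>i\<in>S. W i * G i s)"
      using that fin by (rule ginner_bvec_r)
    also have "\<dots> = (\<Sum>i\<in>S. \<Sum>r\<in>S. H i r * Kz S C G X Y (bvec r) * G i s) / 2"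
      by (simp add: W_def lcH_def sum_divide_distrib sum_distrib_right)
    also have "\<dots> = (\<Sum>r\<in>S. \<Sum>i\<in>S. Kz S C G X Y (bvec r) * (H i r * G i s)) / 2"
      by (subst sum.swap) (simp add: mult_ac)
    also have "\<dots> = (\<Sum>r\<in>S. Kz S C G X Y (bvec r) * (if r = s then 1 else 0)) / 2"
      by (simp add: sum_distrib_left[symmetric] inv2 that)
    also have "\<dots> = Kz S C G X Y (bvec s) / 2"
      using that fin by (simp add: delta_simps)
    finally show ?thesis .
  qed
  have sat: "2 * ginner S G W Z = Kz S C G X Y Z" for Z
  proof -
    have "2 * ginner S G W Z = (\<Sum>r\<in>S. Z r * (2 * ginner S G W (bvec r)))"
      by (subst ginner_right[OF fin]) (simp add: sum_distrib_left mult_ac)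
    also have "\<dots> = (\<Sum>r\<in>S. Z r * Kz S C G X Y (bvec r))"
      by (intro sum.cong) (auto simp: Wb)
    also have "\<dots> = Kz S C G X Y Z" by (rule Kz_right[OF fin, symmetric])
    finally show ?thesis .
  qed
  have supp: "\<forall>k. k \<notin> S \<longrightarrow> W k = 0" by (simp add: W_def lcH_def)
  have uniq: "W' = W" if s1: "\<forall>k. k \<notin> S \<longrightarrow> W' k = 0"
     and s2: "\<forall>Z. 2 * ginner S G W' Z = Kz S C G X Y Z" for W'
  proof
    fix k
    show "W' k = W k"
    proof (cases "k \<in> S")
      case False thus ?thesis using s1 supp by auto
    next
      case True
      have z: "(\<Sum>i\<in>S. (W' i - W i) * G i s) = 0" if "s \<in> S" for s
      proof -
        have "ginner S G W' (bvec s) = ginner S G W (bvec s)"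
          using s2 sat[of "bvec s"] by (metis mult_cancel_left zero_neq_numeral)
        thus ?thesis using that fin
          by (simp add: ginner_bvec_r left_diff_distrib sum_subtractf)
      qed
      have "W' k - W k = (\<Sum>i\<in>S. (W' i - W i) * (if i = k then 1 else 0))"
        using True fin by (simp add: delta_simps)
      also have "\<dots> = (\<Sum>i\<in>S. \<Sum>j\<in>S. (W' i - W i) * G i j * H j k)"
        using True by (intro sum.cong) (auto simp: inv[symmetric] sum_distrib_left mult_ac)
      also have "\<dots> = (\<Sum>j\<in>S. (\<Sum>i\<in>S. (W' i - W i) * G i j) * H j k)"
        by (subst sum.swap) (simp add: sum_distrib_right)
      also have "\<dots> = 0" by (simp add: z)
      finally show ?thesis by simp
    qed
  qed
  have "lc S C G X Y = W"
    unfolding lc_def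
  proof (rule the_equality)
    show "(\<forall>k. k \<notin> S \<longrightarrow> W k = 0) \<and> (\<forall>Z. 2 * ginner S G W Z = ginner S G (vbr S C X Y) Z - ginner S G (vbr S C Y Z) X + ginner S G (vbr S C Z X) Y)"
      using supp sat by (simp add: Kz_def)
  next
    fix W' assume "(\<forall>k. k \<notin> S \<longrightarrow> W' k = 0) \<and> (\<forall>Z. 2 * ginner S G W' Z = ginner S G (vbr S C X Y) Z - ginner S G (vbr S C Y Z) X + ginner S G (vbr S C Z X) Y)"
    then show "W' = W" using uniq by (simp add: Kz_def)
  qed
  thus ?thesis by (simp add: W_def)
qed


lemma vbr_bvec: "finite S \<Longrightarrow> p \<in> S \<Longrightarrow> q \<in> S \<Longrightarrow> vbr S C (bvec p) (bvec q) = (\<lambda>k. if k \<in> S then C p q k else 0)"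
  unfolding vbr_def bvec_def by (simp add: delta_simps cong: if_cong)

lemma Kz_bvec: assumes "finite S" "p \<in> S" "q \<in> S" "r \<in> S"
  shows "Kz S C G (bvec p) (bvec q) (bvec r) = (\<Sum>l\<in>S. C p q l * G l r) - (\<Sum>l\<in>S. C q r l * G l p) + (\<Sum>l\<in>S. C r p l * G l q)"
  using assms by (simp add: Kz_def ginner_bvec_r vbr_bvec if0_mult cong: if_cong)

locale lcsetup =
  fixes S :: "'b set" and C :: "'b \<Rightarrow> 'b \<Rightarrow> 'b \<Rightarrow> real" and G H :: "'b \<Rightarrow> 'b \<Rightarrow> real"
  assumes fin: "finite S"
    and Gsym: "\<And>i j. i \<in> S \<Longrightarrow> j \<in> S \<Longrightarrow> G i j = G j i"
    and Hsym: "\<And>i j. i \<in> S \<Longrightarrow> j \<in> S \<Longrightarrow> H i j = H j i"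
    and inv: "\<And>i k. i \<in> S \<Longrightarrow> k \<in> S \<Longrightarrow> (\<Sum>j\<in>S. G i j * H j k) = (if i = k then 1 else 0)"
begin

definition Gam where "Gam p q k = lc S C G (bvec p) (bvec q) k"

lemma lc_eq: "lc S C G X Y = lcH S C G H X Y"
  by (rule lc_formula[OF fin Gsym Hsym inv])

lemma Kz_bil: "Kz S C G X Y Z = (\<Sum>p\<in>S. \<Sum>q\<in>S. X p * Y q * Kz S C G (bvec p) (bvec q) Z)"
  apply (subst Kz_left[OF fin])
  apply (subst Kz_mid[OF fin])
  apply (simp add: sum_distrib_left mult_ac)
  done

lemma lc_bil: "lc S C G X Y k = (\<Sum>p\<in>S. \<Sum>q\<in>S. X p * Y q * Gam p q k)"
proof (cases "k \<in> S")
  case True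
  have "lc S C G X Y k = (\<Sum>r\<in>S. H k r * (\<Sum>p\<in>S. \<Sum>q\<in>S. X p * Y q * Kz S C G (bvec p) (bvec q) (bvec r))) / 2"
    using True by (simp add: lc_eq lcH_def Kz_bil[of X Y])
  also have "\<dots> = (\<Sum>r\<in>S. \<Sum>p\<in>S. \<Sum>q\<in>S. X p * Y q * (H k r * Kz S C G (bvec p) (bvec q) (bvec r))) / 2"
    by (simp add: sum_distrib_left mult_ac)
  also have "\<dots> = (\<Sum>p\<in>S. \<Sum>r\<in>S. \<Sum>q\<in>S. X p * Y q * (H k r * Kz S C G (bvec p) (bvec q) (bvec r))) / 2"
    by (rule arg_cong[where f="\<lambda>x. x / 2"], rule sum.swap)
  also have "\<dots> = (\<Sum>p\<in>S. \<Sum>q\<in>S. \<Sum>r\<in>S. X p * Y q * (H k r * Kz S C G (bvec p) (bvec q) (bvec r))) / 2"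
    by (rule arg_cong[where f="\<lambda>x. x / 2"], rule sum.cong[OF refl], rule sum.swap)
  also have "\<dots> = (\<Sum>p\<in>S. \<Sum>q\<in>S. X p * Y q * Gam p q k)"
    using True by (simp add: Gam_def lc_eq lcH_def sum_distrib_left sum_divide_distrib)
  finally show ?thesis .
next
  case False
  thus ?thesis by (simp add: lc_eq lcH_def Gam_def)
qed

lemma lc_bvec_l: "i \<in> S \<Longrightarrow> lc S C G (bvec i) Y k = (\<Sum>q\<in>S. Y q * Gam i q k)"
  by (simp add: lc_bil bvec_def delta_simps fin)

lemma lc_bvec_r: "x \<in> S \<Longrightarrow> lc S C G X (bvec x) k = (\<Sum>p\<in>S. X p * Gam p x k)"
  by (simp add: lc_bil bvec_def delta_simps fin)

lemma ricci_bvec: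
  assumes "x \<in> S"
  shows "ricci S C G (bvec x) (bvec x) = (\<Sum>i\<in>S. (\<Sum>q\<in>S. Gam x x q * Gam i q i)
          - (\<Sum>q\<in>S. Gam i x q * Gam x q i) - (\<Sum>p\<in>S. C i x p * Gam p x i))"
  unfolding ricci_def
proof (intro sum.cong refl)
  fix i assume i: "i \<in> S"
  have a: "lc S C G (bvec i) (lc S C G (bvec x) (bvec x)) i = (\<Sum>q\<in>S. Gam x x q * Gam i q i)"
    using i by (simp add: lc_bvec_l Gam_def[symmetric])
  have b: "lc S C G (bvec x) (lc S C G (bvec i) (bvec x)) i = (\<Sum>q\<in>S. Gam i x q * Gam x q i)"
    using assms by (simp add: lc_bvec_l Gam_def[symmetric])
  have c: "lc S C G (vbr S C (bvec i) (bvec x)) (bvec x) i = (\<Sum>p\<in>S. C i x p * Gam p x i)"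
    using assms i by (simp add: lc_bvec_r vbr_bvec fin)
  show "curv S C G (bvec i) (bvec x) (bvec x) i = (\<Sum>q\<in>S. Gam x x q * Gam i q i)
          - (\<Sum>q\<in>S. Gam i x q * Gam x q i) - (\<Sum>p\<in>S. C i x p * Gam p x i)"
    unfolding curv_def a b c ..
qed

end


lemma mem_lset[simp]:
  "BR m \<in> lset n \<longleftrightarrow> 1 \<le> m \<and> m \<le> n - 1"
  "BI m \<in> lset n \<longleftrightarrow> 1 \<le> m \<and> m \<le> n - 1"
  "Ee m \<in> lset n \<longleftrightarrow> m \<le> n - 1"
  "Ff m \<in> lset n \<longleftrightarrow> m \<le> n - 1"
  "Zb \<in> lset n"
  by (auto simp: lset_def)

lemma finite_lset[simp]: "finite (lset n)"
  by (simp add: lset_def)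

definition lH :: "real \<Rightarrow> real \<Rightarrow> lb \<Rightarrow> lb \<Rightarrow> real" where
  "lH \<rho> c x y = (case (x, y) of
     (BR a, BR b) \<Rightarrow> (if a = b then (if a = 1 then \<rho> / (\<rho> + c) else 4 * \<rho> / (\<rho> + c)) else 0)
   | (BI a, BI b) \<Rightarrow> (if a = b then (if a = 1 then \<rho> / (\<rho> + c) else 4 * \<rho> / (\<rho> + c)) else 0)
   | (Ee a, Ee b) \<Rightarrow> (if a = b then (if a = 0 then 4 * \<rho>^2 / (\<rho> + 2*c) else 4 * \<rho>) else 0)
   | (Ff a, Ff b) \<Rightarrow> (if a = b then (if a = 0 then 4 * \<rho>^2 / (\<rho> + 2*c) else 4 * \<rho>) else 0)
   | (Zb, Zb) \<Rightarrow> 4 * \<rho> * (\<rho> + c)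
   | (BI a, Zb) \<Rightarrow> (if a = 1 then 2 * \<rho> * c / (\<rho> + c) else 0)
   | (Zb, BI a) \<Rightarrow> (if a = 1 then 2 * \<rho> * c / (\<rho> + c) else 0)
   | _ \<Rightarrow> 0)"

definition gz :: "real \<Rightarrow> real \<Rightarrow> real" where "gz \<rho> c = - (c * (\<rho> + c)) / (2 * \<rho>^2 * (\<rho> + 2*c))"
definition hz :: "real \<Rightarrow> real \<Rightarrow> real" where "hz \<rho> c = 2 * \<rho> * c / (\<rho> + c)"

lemma lG_sparse: "lG \<rho> c l r = (if l = r then lG \<rho> c r r else 0)
   + (if l = BI 1 \<and> r = Zb \<or> l = Zb \<and> r = BI 1 then gz \<rho> c else 0)"
  by (cases l; cases r) (auto simp: lG_def gz_def)

lemma lH_sparse: "lH \<rho> c l r = (if l = r then lH \<rho> c r r else 0)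
   + (if l = BI 1 \<and> r = Zb \<or> l = Zb \<and> r = BI 1 then hz \<rho> c else 0)"
  by (cases l; cases r) (auto simp: lH_def hz_def)

lemma lG_sym: "lG \<rho> c i j = lG \<rho> c j i"
  by (cases i; cases j) (auto simp: lG_def)

lemma lH_sym: "lH \<rho> c i j = lH \<rho> c j i"
  by (cases i; cases j) (auto simp: lH_def)

lemma sum_sparse_r:
  fixes f :: "lb \<Rightarrow> real"
  assumes "r \<in> lset n" "n \<ge> 2"
  shows "(\<Sum>l\<in>lset n. f l * (if l = r then a else 0) + f l * (if l = BI 1 \<and> r = Zb \<or> l = Zb \<and> r = BI 1 then b else 0))
     = f r * a + (if r = Zb then f (BI 1) * b else 0) + (if r = BI 1 then f Zb * b else 0)"
proof -
  have "(\<Sum>l\<in>lset n. f l * (if l = r then a else 0) + f l * (if l = BI 1 \<and> r = Zb \<or> l = Zb \<and> r = BI 1 then b else 0))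
    = (\<Sum>l\<in>lset n. (if l = r then f r * a else 0) + ((if r = Zb then (if l = BI 1 then f (BI 1) * b else 0) else 0)
         + (if r = BI 1 then (if l = Zb then f Zb * b else 0) else 0)))"
    by (intro sum.cong) auto
  also have "\<dots> = f r * a + (if r = Zb then f (BI 1) * b else 0) + (if r = BI 1 then f Zb * b else 0)"
    using assms by (auto simp add: sum.distrib delta_simps)
  finally show ?thesis .
qed

lemma sumG: assumes "r \<in> lset n" "n \<ge> 2"
  shows "(\<Sum>l\<in>lset n. f l * lG \<rho> c l r) = f r * lG \<rho> c r r + (if r = Zb then f (BI 1) * gz \<rho> c else 0) + (if r = BI 1 then f Zb * gz \<rho> c else 0)"
  apply (subst lG_sparse)
  apply (simp only: distrib_left)
  apply (rule sum_sparse_r[OF assms])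
  done

lemma sumH: assumes "r \<in> lset n" "n \<ge> 2"
  shows "(\<Sum>l\<in>lset n. f l * lH \<rho> c l r) = f r * lH \<rho> c r r + (if r = Zb then f (BI 1) * hz \<rho> c else 0) + (if r = BI 1 then f Zb * hz \<rho> c else 0)"
  apply (subst lH_sparse)
  apply (simp only: distrib_left)
  apply (rule sum_sparse_r[OF assms])
  done

lemma inv_lGH:
  assumes "n \<ge> 2" "\<rho> > 0" "c > 0" "i \<in> lset n" "k \<in> lset n"
  shows "(\<Sum>j\<in>lset n. lG \<rho> c i j * lH \<rho> c j k) = (if i = k then 1 else 0)"
proof -
  have "(\<Sum>j\<in>lset n. lG \<rho> c i j * lH \<rho> c j k) = lG \<rho> c i k * lH \<rho> c k k + (if k = Zb then lG \<rho> c i (BI 1) * hz \<rho> c else 0) + (if k = BI 1 then lG \<rho> c i Zb * hz \<rho> c else 0)"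
    by (rule sumH[OF assms(5,1)])
  also have "\<dots> = (if i = k then 1 else 0)"
  proof -
    have p: "\<rho> + c > 0" "\<rho> + 2 * c > 0" "\<rho> \<noteq> 0" using assms by auto
    hence p2: "\<rho> + c \<noteq> 0" "\<rho> + 2 * c \<noteq> 0" by auto
    show "lG \<rho> c i k * lH \<rho> c k k + (if k = Zb then lG \<rho> c i (BI 1) * hz \<rho> c else 0) + (if k = BI 1 then lG \<rho> c i Zb * hz \<rho> c else 0) = (if i = k then 1 else 0)"
      using assms p2
      apply (cases i; cases k)
      apply (auto simp: lG_def lH_def hz_def divide_simps power2_eq_square power3_eq_cube)
      apply (simp_all add: algebra_simps)
      done
  qed
  finally show ?thesis .
qed

locale conc =
  fixes n :: nat and \<rho> c :: real
  assumes n2: "n \<ge> 2" and rp: "\<rho> > 0" and cp: "c > 0"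
begin

sublocale lcsetup "lset n" lC "lG \<rho> c" "lH \<rho> c"
  apply unfold_locales
     apply simp
    apply (rule lG_sym)
   apply (rule lH_sym)
  apply (rule inv_lGH[OF n2 rp cp], assumption+)
  done

definition Kb where "Kb p q r = (\<Sum>l\<in>lset n. lC p q l * lG \<rho> c l r) - (\<Sum>l\<in>lset n. lC q r l * lG \<rho> c l p) + (\<Sum>l\<in>lset n. lC r p l * lG \<rho> c l q)"

lemma Kb_eval: assumes "p \<in> lset n" "q \<in> lset n" "r \<in> lset n"
  shows "Kb p q r = (lC p q r * lG \<rho> c r r + (if r = Zb then lC p q (BI 1) * gz \<rho> c else 0) + (if r = BI 1 then lC p q Zb * gz \<rho> c else 0))
    - (lC q r p * lG \<rho> c p p + (if p = Zb then lC q r (BI 1) * gz \<rho> c else 0) + (if p = BI 1 then lC q r Zb * gz \<rho> c else 0))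
    + (lC r p q * lG \<rho> c q q + (if q = Zb then lC r p (BI 1) * gz \<rho> c else 0) + (if q = BI 1 then lC r p Zb * gz \<rho> c else 0))"
  unfolding Kb_def by (simp only: sumG[OF assms(1) n2] sumG[OF assms(2) n2] sumG[OF assms(3) n2])

lemma Gam_eval: assumes "p \<in> lset n" "q \<in> lset n" "k \<in> lset n"
  shows "Gam p q k = (Kb p q k * lH \<rho> c k k + (if k = Zb then Kb p q (BI 1) * hz \<rho> c else 0) + (if k = BI 1 then Kb p q Zb * hz \<rho> c else 0)) / 2"
proof -
  have "Gam p q k = (\<Sum>r\<in>lset n. lH \<rho> c k r * Kz (lset n) lC (lG \<rho> c) (bvec p) (bvec q) (bvec r)) / 2"
    using assms by (simp add: Gam_def lc_eq lcH_def)
  also have "\<dots> = (\<Sum>r\<in>lset n. Kb p q r * lH \<rho> c r k) / 2"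
    using assms by (intro arg_cong[where f="\<lambda>x. x/2"] sum.cong) (auto simp: Kz_bvec Kb_def lH_sym)
  also have "\<dots> = (Kb p q k * lH \<rho> c k k + (if k = Zb then Kb p q (BI 1) * hz \<rho> c else 0) + (if k = BI 1 then Kb p q Zb * hz \<rho> c else 0)) / 2"
    by (subst sumH[OF assms(3) n2]) (rule refl)
  finally show ?thesis .
qed

lemma Gam_out: "k \<notin> lset n \<Longrightarrow> Gam p q k = 0"
  by (simp add: Gam_def lc_eq lcH_def)

lemmas ev = Gam_eval Kb_eval lC_def lup_def dl_def lG_def lH_def gz_def hz_def

definition Tf where "Tf x i = (\<Sum>q\<in>lset n. Gam x x q * Gam i q i) - (\<Sum>q\<in>lset n. Gam i x q * Gam x q i) - (\<Sum>p\<in>lset n. lC i x p * Gam p x i)"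

lemma pos_ne: "0 < (x::real) \<Longrightarrow> (x = 0) \<longleftrightarrow> False" by auto
lemmas posr = pos_ne add_pos_pos zero_less_mult_iff rp cp

lemma nz: "\<rho> \<noteq> 0" "\<rho> + c \<noteq> 0" "\<rho> + 2 * c \<noteq> 0" "c \<noteq> 0" "n - 1 \<ge> 1"
  using rp cp n2 by auto

end


context conc begin

lemma col_BR1_E0:
  shows "Gam (BR 1) (Ee 0) k = (if k = (Ee 1) then (1*c)/(\<rho>^1) else 0)"
proof (cases "k \<in> lset n")
  case True
  then show ?thesis using nz
    apply (cases k)
    apply (auto simp: ev)
    apply (simp_all add: divide_simps)?
    apply (simp_all add: algebra_simps power2_eq_square power3_eq_cube posr)?
    done
qed (use n2 in \<open>auto simp: Gam_out\<close>)

lemma brk_BR1_E0: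
  shows "lC (BR 1) (Ee 0) k = (if k = (Ee 1) then ((-1)) else 0)"
  using n2 by (cases k) (auto simp: lC_def lup_def dl_def)

lemma col_BRa_E0:
  fixes a :: nat
  assumes a: "2 \<le> a" "a \<le> n - 1"
  shows "Gam (BR a) (Ee 0) k = (if k = (Ee a) then ((1/2)*c)/(\<rho>^1) else 0)"
proof (cases "k \<in> lset n")
  case True
  then show ?thesis using a nz
    apply (cases k)
    apply (auto simp: ev)
    apply (simp_all add: divide_simps)?
    apply (simp_all add: algebra_simps power2_eq_square power3_eq_cube posr)?
    done
qed (use a n2 in \<open>auto simp: Gam_out\<close>)

lemma brk_BRa_E0:
  fixes a :: nat
  assumes a: "2 \<le> a" "a \<le> n - 1"
  shows "lC (BR a) (Ee 0) k = (if k = (Ee a) then ((-1/2)) else 0)"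
  using a n2 by (cases k) (auto simp: lC_def lup_def dl_def)

lemma col_BI1_E0:
  shows "Gam (BI 1) (Ee 0) k = (if k = (Ff 0) then ((-1)*\<rho>^2 + (-3)*\<rho>*c + (-3)*c^2)/((\<rho>+2*c)^2) else 0) + (if k = (Ff 1) then ((-1)*c)/(\<rho>^1) else 0)"
proof (cases "k \<in> lset n")
  case True
  then show ?thesis using nz
    apply (cases k)
    apply (auto simp: ev)
    apply (simp_all add: divide_simps)?
    apply (simp_all add: algebra_simps power2_eq_square power3_eq_cube posr)?
    done
qed (use n2 in \<open>auto simp: Gam_out\<close>)

lemma brk_BI1_E0:
  shows "lC (BI 1) (Ee 0) k = (if k = (Ff 0) then ((-1)) else 0) + (if k = (Ff 1) then (1) else 0)"
  using n2 by (cases k) (auto simp: lC_def lup_def dl_def)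

lemma col_BIa_E0:
  fixes a :: nat
  assumes a: "2 \<le> a" "a \<le> n - 1"
  shows "Gam (BI a) (Ee 0) k = (if k = (Ff a) then ((-1/2)*c)/(\<rho>^1) else 0)"
proof (cases "k \<in> lset n")
  case True
  then show ?thesis using a nz
    apply (cases k)
    apply (auto simp: ev)
    apply (simp_all add: divide_simps)?
    apply (simp_all add: algebra_simps power2_eq_square power3_eq_cube posr)?
    done
qed (use a n2 in \<open>auto simp: Gam_out\<close>)

lemma brk_BIa_E0:
  fixes a :: nat
  assumes a: "2 \<le> a" "a \<le> n - 1"
  shows "lC (BI a) (Ee 0) k = (if k = (Ff a) then ((1/2)) else 0)"
  using a n2 by (cases k) (auto simp: lC_def lup_def dl_def)

lemma col_E0_E0:
  shows "Gam (Ee 0) (Ee 0) k = 0"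
proof (cases "k \<in> lset n")
  case True
  then show ?thesis using nz
    apply (cases k)
    apply (auto simp: ev)
    apply (simp_all add: divide_simps)?
    apply (simp_all add: algebra_simps power2_eq_square power3_eq_cube posr)?
    done
qed (use n2 in \<open>auto simp: Gam_out\<close>)

lemma brk_E0_E0:
  shows "lC (Ee 0) (Ee 0) k = 0"
  using n2 by (cases k) (auto simp: lC_def lup_def dl_def)

lemma col_E1_E0:
  shows "Gam (Ee 1) (Ee 0) k = (if k = (BR 1) then ((-1/4))/(\<rho>^1) else 0)"
proof (cases "k \<in> lset n")
  case True
  then show ?thesis using nz
    apply (cases k)
    apply (auto simp: ev)
    apply (simp_all add: divide_simps)?
    apply (simp_all add: algebra_simps power2_eq_square power3_eq_cube posr)?
    done
qed (use n2 in \<open>auto simp: Gam_out\<close>)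

lemma brk_E1_E0:
  shows "lC (Ee 1) (Ee 0) k = 0"
  using n2 by (cases k) (auto simp: lC_def lup_def dl_def)

lemma col_Ea_E0:
  fixes a :: nat
  assumes a: "2 \<le> a" "a \<le> n - 1"
  shows "Gam (Ee a) (Ee 0) k = (if k = (BR a) then ((-1/2))/(\<rho>^1) else 0)"
proof (cases "k \<in> lset n")
  case True
  then show ?thesis using a nz
    apply (cases k)
    apply (auto simp: ev)
    apply (simp_all add: divide_simps)?
    apply (simp_all add: algebra_simps power2_eq_square power3_eq_cube posr)?
    done
qed (use a n2 in \<open>auto simp: Gam_out\<close>)

lemma brk_Ea_E0:
  fixes a :: nat
  assumes a: "2 \<le> a" "a \<le> n - 1"
  shows "lC (Ee a) (Ee 0) k = 0"
  using a n2 by (cases k) (auto simp: lC_def lup_def dl_def)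

lemma col_F0_E0:
  shows "Gam (Ff 0) (Ee 0) k = (if k = Zb then ((-1/2)) else 0)"
proof (cases "k \<in> lset n")
  case True
  then show ?thesis using nz
    apply (cases k)
    apply (auto simp: ev)
    apply (simp_all add: divide_simps)?
    apply (simp_all add: algebra_simps power2_eq_square power3_eq_cube posr)?
    done
qed (use n2 in \<open>auto simp: Gam_out\<close>)

lemma brk_F0_E0:
  shows "lC (Ff 0) (Ee 0) k = (if k = Zb then ((-1)) else 0)"
  using n2 by (cases k) (auto simp: lC_def lup_def dl_def)

lemma col_F1_E0:
  shows "Gam (Ff 1) (Ee 0) k = (if k = (BI 1) then ((1/4))/(\<rho>^1) else 0) + (if k = Zb then ((1/2)*c)/(\<rho>^1) else 0)"
proof (cases "k \<in> lset n")
  case True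
  then show ?thesis using nz
    apply (cases k)
    apply (auto simp: ev)
    apply (simp_all add: divide_simps)?
    apply (simp_all add: algebra_simps power2_eq_square power3_eq_cube posr)?
    done
qed (use n2 in \<open>auto simp: Gam_out\<close>)

lemma brk_F1_E0:
  shows "lC (Ff 1) (Ee 0) k = 0"
  using n2 by (cases k) (auto simp: lC_def lup_def dl_def)

lemma col_Fa_E0:
  fixes a :: nat
  assumes a: "2 \<le> a" "a \<le> n - 1"
  shows "Gam (Ff a) (Ee 0) k = (if k = (BI a) then ((1/2))/(\<rho>^1) else 0)"
proof (cases "k \<in> lset n")
  case True
  then show ?thesis using a nz
    apply (cases k)
    apply (auto simp: ev)
    apply (simp_all add: divide_simps)?
    apply (simp_all add: algebra_simps power2_eq_square power3_eq_cube posr)?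
    done
qed (use a n2 in \<open>auto simp: Gam_out\<close>)

lemma brk_Fa_E0:
  fixes a :: nat
  assumes a: "2 \<le> a" "a \<le> n - 1"
  shows "lC (Ff a) (Ee 0) k = 0"
  using a n2 by (cases k) (auto simp: lC_def lup_def dl_def)

lemma col_Z_E0:
  shows "Gam Zb (Ee 0) k = (if k = (Ff 0) then ((-1/2)*\<rho> + (-1/2)*c)/((\<rho>+2*c)^2) else 0)"
proof (cases "k \<in> lset n")
  case True
  then show ?thesis using nz
    apply (cases k)
    apply (auto simp: ev)
    apply (simp_all add: divide_simps)?
    apply (simp_all add: algebra_simps power2_eq_square power3_eq_cube posr)?
    done
qed (use n2 in \<open>auto simp: Gam_out\<close>)

lemma brk_Z_E0:
  shows "lC Zb (Ee 0) k = 0"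
  using n2 by (cases k) (auto simp: lC_def lup_def dl_def)

end

context conc begin

lemma col_BR1_E1:
  shows "Gam (BR 1) (Ee 1) k = (if k = (Ee 0) then ((-1)*c)/((\<rho>+2*c)^1) else 0)"
proof (cases "k \<in> lset n")
  case True
  then show ?thesis using nz
    apply (cases k)
    apply (auto simp: ev)
    apply (simp_all add: divide_simps)?
    apply (simp_all add: algebra_simps power2_eq_square power3_eq_cube posr)?
    done
qed (use n2 in \<open>auto simp: Gam_out\<close>)

lemma brk_BR1_E1:
  shows "lC (BR 1) (Ee 1) k = (if k = (Ee 0) then ((-1)) else 0)"
  using n2 by (cases k) (auto simp: lC_def lup_def dl_def)

lemma col_BRa_E1:
  fixes a :: nat
  assumes a: "2 \<le> a" "a \<le> n - 1"
  shows "Gam (BR a) (Ee 1) k = (if k = (Ee a) then ((-1/2)) else 0)"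
proof (cases "k \<in> lset n")
  case True
  then show ?thesis using a nz
    apply (cases k)
    apply (auto simp: ev)
    apply (simp_all add: divide_simps)?
    apply (simp_all add: algebra_simps power2_eq_square power3_eq_cube posr)?
    done
qed (use a n2 in \<open>auto simp: Gam_out\<close>)

lemma brk_BRa_E1:
  fixes a :: nat
  assumes a: "2 \<le> a" "a \<le> n - 1"
  shows "lC (BR a) (Ee 1) k = (if k = (Ee a) then ((-1/2)) else 0)"
  using a n2 by (cases k) (auto simp: lC_def lup_def dl_def)

lemma col_BI1_E1:
  shows "Gam (BI 1) (Ee 1) k = (if k = (Ff 0) then ((-1)*c)/((\<rho>+2*c)^1) else 0) + (if k = (Ff 1) then (1*\<rho>^2 + 1*\<rho>*c + (-1)*c^2)/((\<rho>+2*c)^1*\<rho>^1) else 0)"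
proof (cases "k \<in> lset n")
  case True
  then show ?thesis using nz
    apply (cases k)
    apply (auto simp: ev)
    apply (simp_all add: divide_simps)?
    apply (simp_all add: algebra_simps power2_eq_square power3_eq_cube posr)?
    done
qed (use n2 in \<open>auto simp: Gam_out\<close>)

lemma brk_BI1_E1:
  shows "lC (BI 1) (Ee 1) k = (if k = (Ff 0) then ((-1)) else 0) + (if k = (Ff 1) then (1) else 0)"
  using n2 by (cases k) (auto simp: lC_def lup_def dl_def)

lemma col_BIa_E1:
  fixes a :: nat
  assumes a: "2 \<le> a" "a \<le> n - 1"
  shows "Gam (BI a) (Ee 1) k = (if k = (Ff a) then ((1/2)) else 0)"
proof (cases "k \<in> lset n")
  case True
  then show ?thesis using a nz
    apply (cases k)
    apply (auto simp: ev)
    apply (simp_all add: divide_simps)?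
    apply (simp_all add: algebra_simps power2_eq_square power3_eq_cube posr)?
    done
qed (use a n2 in \<open>auto simp: Gam_out\<close>)

lemma brk_BIa_E1:
  fixes a :: nat
  assumes a: "2 \<le> a" "a \<le> n - 1"
  shows "lC (BI a) (Ee 1) k = (if k = (Ff a) then ((1/2)) else 0)"
  using a n2 by (cases k) (auto simp: lC_def lup_def dl_def)

lemma col_E0_E1:
  shows "Gam (Ee 0) (Ee 1) k = (if k = (BR 1) then ((-1/4))/(\<rho>^1) else 0)"
proof (cases "k \<in> lset n")
  case True
  then show ?thesis using nz
    apply (cases k)
    apply (auto simp: ev)
    apply (simp_all add: divide_simps)?
    apply (simp_all add: algebra_simps power2_eq_square power3_eq_cube posr)?
    done
qed (use n2 in \<open>auto simp: Gam_out\<close>)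

lemma brk_E0_E1:
  shows "lC (Ee 0) (Ee 1) k = 0"
  using n2 by (cases k) (auto simp: lC_def lup_def dl_def)

lemma col_E1_E1:
  shows "Gam (Ee 1) (Ee 1) k = 0"
proof (cases "k \<in> lset n")
  case True
  then show ?thesis using nz
    apply (cases k)
    apply (auto simp: ev)
    apply (simp_all add: divide_simps)?
    apply (simp_all add: algebra_simps power2_eq_square power3_eq_cube posr)?
    done
qed (use n2 in \<open>auto simp: Gam_out\<close>)

lemma brk_E1_E1:
  shows "lC (Ee 1) (Ee 1) k = 0"
  using n2 by (cases k) (auto simp: lC_def lup_def dl_def)

lemma col_Ea_E1:
  fixes a :: nat
  assumes a: "2 \<le> a" "a \<le> n - 1"
  shows "Gam (Ee a) (Ee 1) k = 0"
proof (cases "k \<in> lset n")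
  case True
  then show ?thesis using a nz
    apply (cases k)
    apply (auto simp: ev)
    apply (simp_all add: divide_simps)?
    apply (simp_all add: algebra_simps power2_eq_square power3_eq_cube posr)?
    done
qed (use a n2 in \<open>auto simp: Gam_out\<close>)

lemma brk_Ea_E1:
  fixes a :: nat
  assumes a: "2 \<le> a" "a \<le> n - 1"
  shows "lC (Ee a) (Ee 1) k = 0"
  using a n2 by (cases k) (auto simp: lC_def lup_def dl_def)

lemma col_F0_E1:
  shows "Gam (Ff 0) (Ee 1) k = (if k = (BI 1) then ((-1/4))/(\<rho>^1) else 0) + (if k = Zb then ((-1/2)*c)/(\<rho>^1) else 0)"
proof (cases "k \<in> lset n")
  case True
  then show ?thesis using nz
    apply (cases k)
    apply (auto simp: ev)
    apply (simp_all add: divide_simps)?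
    apply (simp_all add: algebra_simps power2_eq_square power3_eq_cube posr)?
    done
qed (use n2 in \<open>auto simp: Gam_out\<close>)

lemma brk_F0_E1:
  shows "lC (Ff 0) (Ee 1) k = 0"
  using n2 by (cases k) (auto simp: lC_def lup_def dl_def)

lemma col_F1_E1:
  shows "Gam (Ff 1) (Ee 1) k = (if k = Zb then ((1/2)) else 0)"
proof (cases "k \<in> lset n")
  case True
  then show ?thesis using nz
    apply (cases k)
    apply (auto simp: ev)
    apply (simp_all add: divide_simps)?
    apply (simp_all add: algebra_simps power2_eq_square power3_eq_cube posr)?
    done
qed (use n2 in \<open>auto simp: Gam_out\<close>)

lemma brk_F1_E1:
  shows "lC (Ff 1) (Ee 1) k = (if k = Zb then (1) else 0)"
  using n2 by (cases k) (auto simp: lC_def lup_def dl_def)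

lemma col_Fa_E1:
  fixes a :: nat
  assumes a: "2 \<le> a" "a \<le> n - 1"
  shows "Gam (Ff a) (Ee 1) k = 0"
proof (cases "k \<in> lset n")
  case True
  then show ?thesis using a nz
    apply (cases k)
    apply (auto simp: ev)
    apply (simp_all add: divide_simps)?
    apply (simp_all add: algebra_simps power2_eq_square power3_eq_cube posr)?
    done
qed (use a n2 in \<open>auto simp: Gam_out\<close>)

lemma brk_Fa_E1:
  fixes a :: nat
  assumes a: "2 \<le> a" "a \<le> n - 1"
  shows "lC (Ff a) (Ee 1) k = 0"
  using a n2 by (cases k) (auto simp: lC_def lup_def dl_def)

lemma col_Z_E1:
  shows "Gam Zb (Ee 1) k = (if k = (Ff 1) then ((1/2)*\<rho> + (1/2)*c)/((\<rho>+2*c)^1*\<rho>^1) else 0)"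
proof (cases "k \<in> lset n")
  case True
  then show ?thesis using nz
    apply (cases k)
    apply (auto simp: ev)
    apply (simp_all add: divide_simps)?
    apply (simp_all add: algebra_simps power2_eq_square power3_eq_cube posr)?
    done
qed (use n2 in \<open>auto simp: Gam_out\<close>)

lemma brk_Z_E1:
  shows "lC Zb (Ee 1) k = 0"
  using n2 by (cases k) (auto simp: lC_def lup_def dl_def)

end

context conc begin

lemma T_BR1_E0:
  shows "Tf (Ee 0) (BR 1) = ((-1/4)*\<rho> + (1/4)*c)/(\<rho>^2)"
  unfolding Tf_def
  apply (simp only: col_BR1_E0 brk_BR1_E0 col_E0_E0)
  using nz
  apply (simp add: distrib_right sum.distrib delta_simps)?
  apply (auto simp: ev)?
  apply (simp_all add: divide_simps)?
  apply (simp_all add: algebra_simps power2_eq_square power3_eq_cube posr)?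
  done

lemma T_BRa_E0:
  fixes a :: nat
  assumes a: "2 \<le> a" "a \<le> n - 1"
  shows "Tf (Ee 0) (BR a) = ((-1/4)*\<rho> + (1/4)*c)/(\<rho>^2)"
  unfolding Tf_def
  apply (simp only: col_BRa_E0 [OF a] brk_BRa_E0 [OF a] col_E0_E0)
  using a nz
  apply (simp add: distrib_right sum.distrib delta_simps)?
  apply (auto simp: ev)?
  apply (simp_all add: divide_simps)?
  apply (simp_all add: algebra_simps power2_eq_square power3_eq_cube posr)?
  done

lemma T_BI1_E0:
  shows "Tf (Ee 0) (BI 1) = ((-1/4)*\<rho> + (1/4)*c)/(\<rho>^2)"
  unfolding Tf_def
  apply (simp only: col_BI1_E0 brk_BI1_E0 col_E0_E0)
  using nz
  apply (simp add: distrib_right sum.distrib delta_simps)?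
  apply (auto simp: ev)?
  apply (simp_all add: divide_simps)?
  apply (simp_all add: algebra_simps power2_eq_square power3_eq_cube posr)?
  done

lemma T_BIa_E0:
  fixes a :: nat
  assumes a: "2 \<le> a" "a \<le> n - 1"
  shows "Tf (Ee 0) (BI a) = ((-1/4)*\<rho> + (1/4)*c)/(\<rho>^2)"
  unfolding Tf_def
  apply (simp only: col_BIa_E0 [OF a] brk_BIa_E0 [OF a] col_E0_E0)
  using a nz
  apply (simp add: distrib_right sum.distrib delta_simps)?
  apply (auto simp: ev)?
  apply (simp_all add: divide_simps)?
  apply (simp_all add: algebra_simps power2_eq_square power3_eq_cube posr)?
  done

lemma T_E0_E0:
  shows "Tf (Ee 0) (Ee 0) = 0"
  unfolding Tf_def
  apply (simp only: col_E0_E0 brk_E0_E0 col_E0_E0)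
  using nz
  apply (simp add: distrib_right sum.distrib delta_simps)?
  apply (auto simp: ev)?
  apply (simp_all add: divide_simps)?
  apply (simp_all add: algebra_simps power2_eq_square power3_eq_cube posr)?
  done

lemma T_E1_E0:
  shows "Tf (Ee 0) (Ee 1) = ((1/4)*\<rho> + (1/4)*c)/(\<rho>^2)"
  unfolding Tf_def
  apply (simp only: col_E1_E0 brk_E1_E0 col_E0_E0)
  using nz
  apply (simp add: distrib_right sum.distrib delta_simps)?
  apply (auto simp: ev)?
  apply (simp_all add: divide_simps)?
  apply (simp_all add: algebra_simps power2_eq_square power3_eq_cube posr)?
  done

lemma T_Ea_E0:
  fixes a :: nat
  assumes a: "2 \<le> a" "a \<le> n - 1"
  shows "Tf (Ee 0) (Ee a) = ((1/4)*\<rho> + (1/4)*c)/(\<rho>^2)"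
  unfolding Tf_def
  apply (simp only: col_Ea_E0 [OF a] brk_Ea_E0 [OF a] col_E0_E0)
  using a nz
  apply (simp add: distrib_right sum.distrib delta_simps)?
  apply (auto simp: ev)?
  apply (simp_all add: divide_simps)?
  apply (simp_all add: algebra_simps power2_eq_square power3_eq_cube posr)?
  done

lemma T_F0_E0:
  shows "Tf (Ee 0) (Ff 0) = ((-3/4)*\<rho> + (-3/4)*c)/((\<rho>+2*c)^2)"
  unfolding Tf_def
  apply (simp only: col_F0_E0 brk_F0_E0 col_E0_E0)
  using nz
  apply (simp add: distrib_right sum.distrib delta_simps)?
  apply (auto simp: ev)?
  apply (simp_all add: divide_simps)?
  apply (simp_all add: algebra_simps power2_eq_square power3_eq_cube posr)?
  done

lemma T_F1_E0:
  shows "Tf (Ee 0) (Ff 1) = ((1/4)*\<rho> + (1/4)*c)/(\<rho>^2)"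
  unfolding Tf_def
  apply (simp only: col_F1_E0 brk_F1_E0 col_E0_E0)
  using nz
  apply (simp add: distrib_right sum.distrib delta_simps)?
  apply (auto simp: ev)?
  apply (simp_all add: divide_simps)?
  apply (simp_all add: algebra_simps power2_eq_square power3_eq_cube posr)?
  done

lemma T_Fa_E0:
  fixes a :: nat
  assumes a: "2 \<le> a" "a \<le> n - 1"
  shows "Tf (Ee 0) (Ff a) = ((1/4)*\<rho> + (1/4)*c)/(\<rho>^2)"
  unfolding Tf_def
  apply (simp only: col_Fa_E0 [OF a] brk_Fa_E0 [OF a] col_E0_E0)
  using a nz
  apply (simp add: distrib_right sum.distrib delta_simps)?
  apply (auto simp: ev)?
  apply (simp_all add: divide_simps)?
  apply (simp_all add: algebra_simps power2_eq_square power3_eq_cube posr)?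
  done

lemma T_Z_E0:
  shows "Tf (Ee 0) Zb = ((1/4)*\<rho> + (1/4)*c)/((\<rho>+2*c)^2)"
  unfolding Tf_def
  apply (simp only: col_Z_E0 brk_Z_E0 col_E0_E0)
  using nz
  apply (simp add: distrib_right sum.distrib delta_simps)?
  apply (auto simp: ev)?
  apply (simp_all add: divide_simps)?
  apply (simp_all add: algebra_simps power2_eq_square power3_eq_cube posr)?
  done

end

context conc begin

lemma T_BR1_E1:
  shows "Tf (Ee 1) (BR 1) = ((-1/4)*\<rho> + (-3/4)*c)/((\<rho>+2*c)^1*\<rho>^1)"
  unfolding Tf_def
  apply (simp only: col_BR1_E1 brk_BR1_E1 col_E1_E1)
  using nz
  apply (simp add: distrib_right sum.distrib delta_simps)?
  apply (auto simp: ev)?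
  apply (simp_all add: divide_simps)?
  apply (simp_all add: algebra_simps power2_eq_square power3_eq_cube posr)?
  done

lemma T_BRa_E1:
  fixes a :: nat
  assumes a: "2 \<le> a" "a \<le> n - 1"
  shows "Tf (Ee 1) (BR a) = 0"
  unfolding Tf_def
  apply (simp only: col_BRa_E1 [OF a] brk_BRa_E1 [OF a] col_E1_E1)
  using a nz
  apply (simp add: distrib_right sum.distrib delta_simps)?
  apply (auto simp: ev)?
  apply (simp_all add: divide_simps)?
  apply (simp_all add: algebra_simps power2_eq_square power3_eq_cube posr)?
  done

lemma T_BI1_E1:
  shows "Tf (Ee 1) (BI 1) = ((-1/4)*\<rho> + (-3/4)*c)/((\<rho>+2*c)^1*\<rho>^1)"
  unfolding Tf_def
  apply (simp only: col_BI1_E1 brk_BI1_E1 col_E1_E1)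
  using nz
  apply (simp add: distrib_right sum.distrib delta_simps)?
  apply (auto simp: ev)?
  apply (simp_all add: divide_simps)?
  apply (simp_all add: algebra_simps power2_eq_square power3_eq_cube posr)?
  done

lemma T_BIa_E1:
  fixes a :: nat
  assumes a: "2 \<le> a" "a \<le> n - 1"
  shows "Tf (Ee 1) (BI a) = 0"
  unfolding Tf_def
  apply (simp only: col_BIa_E1 [OF a] brk_BIa_E1 [OF a] col_E1_E1)
  using a nz
  apply (simp add: distrib_right sum.distrib delta_simps)?
  apply (auto simp: ev)?
  apply (simp_all add: divide_simps)?
  apply (simp_all add: algebra_simps power2_eq_square power3_eq_cube posr)?
  done

lemma T_E0_E1:
  shows "Tf (Ee 1) (Ee 0) = ((1/4)*\<rho> + (1/4)*c)/((\<rho>+2*c)^1*\<rho>^1)"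
  unfolding Tf_def
  apply (simp only: col_E0_E1 brk_E0_E1 col_E1_E1)
  using nz
  apply (simp add: distrib_right sum.distrib delta_simps)?
  apply (auto simp: ev)?
  apply (simp_all add: divide_simps)?
  apply (simp_all add: algebra_simps power2_eq_square power3_eq_cube posr)?
  done

lemma T_E1_E1:
  shows "Tf (Ee 1) (Ee 1) = 0"
  unfolding Tf_def
  apply (simp only: col_E1_E1 brk_E1_E1 col_E1_E1)
  using nz
  apply (simp add: distrib_right sum.distrib delta_simps)?
  apply (auto simp: ev)?
  apply (simp_all add: divide_simps)?
  apply (simp_all add: algebra_simps power2_eq_square power3_eq_cube posr)?
  done

lemma T_Ea_E1:
  fixes a :: nat
  assumes a: "2 \<le> a" "a \<le> n - 1"
  shows "Tf (Ee 1) (Ee a) = 0"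
  unfolding Tf_def
  apply (simp only: col_Ea_E1 [OF a] brk_Ea_E1 [OF a] col_E1_E1)
  using a nz
  apply (simp add: distrib_right sum.distrib delta_simps)?
  apply (auto simp: ev)?
  apply (simp_all add: divide_simps)?
  apply (simp_all add: algebra_simps power2_eq_square power3_eq_cube posr)?
  done

lemma T_F0_E1:
  shows "Tf (Ee 1) (Ff 0) = ((1/4)*\<rho> + (1/4)*c)/((\<rho>+2*c)^1*\<rho>^1)"
  unfolding Tf_def
  apply (simp only: col_F0_E1 brk_F0_E1 col_E1_E1)
  using nz
  apply (simp add: distrib_right sum.distrib delta_simps)?
  apply (auto simp: ev)?
  apply (simp_all add: divide_simps)?
  apply (simp_all add: algebra_simps power2_eq_square power3_eq_cube posr)?
  done

lemma T_F1_E1: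
  shows "Tf (Ee 1) (Ff 1) = ((-3/4)*\<rho> + (-3/4)*c)/((\<rho>+2*c)^1*\<rho>^1)"
  unfolding Tf_def
  apply (simp only: col_F1_E1 brk_F1_E1 col_E1_E1)
  using nz
  apply (simp add: distrib_right sum.distrib delta_simps)?
  apply (auto simp: ev)?
  apply (simp_all add: divide_simps)?
  apply (simp_all add: algebra_simps power2_eq_square power3_eq_cube posr)?
  done

lemma T_Fa_E1:
  fixes a :: nat
  assumes a: "2 \<le> a" "a \<le> n - 1"
  shows "Tf (Ee 1) (Ff a) = 0"
  unfolding Tf_def
  apply (simp only: col_Fa_E1 [OF a] brk_Fa_E1 [OF a] col_E1_E1)
  using a nz
  apply (simp add: distrib_right sum.distrib delta_simps)?
  apply (auto simp: ev)?
  apply (simp_all add: divide_simps)?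
  apply (simp_all add: algebra_simps power2_eq_square power3_eq_cube posr)?
  done

lemma T_Z_E1:
  shows "Tf (Ee 1) Zb = ((1/4)*\<rho> + (1/4)*c)/((\<rho>+2*c)^1*\<rho>^1)"
  unfolding Tf_def
  apply (simp only: col_Z_E1 brk_Z_E1 col_E1_E1)
  using nz
  apply (simp add: distrib_right sum.distrib delta_simps)?
  apply (auto simp: ev)?
  apply (simp_all add: divide_simps)?
  apply (simp_all add: algebra_simps power2_eq_square power3_eq_cube posr)?
  done

end


lemma sum_lset:
  assumes "n \<ge> 2"
  shows "(\<Sum>x\<in>lset n. f x) = f (BR 1) + f (BI 1) + f (Ee 0) + f (Ee 1) + f (Ff 0) + f (Ff 1) + f Zb
     + (\<Sum>a\<in>{2..n-1}. f (BR a) + f (BI a) + f (Ee a) + f (Ff a))"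
proof -
  define I where "I = {2..n-1}"
  define A where "A = {BR 1, BI 1, Ee 0, Ee 1, Ff 0, Ff 1, Zb}"
  have eq: "lset n = A \<union> (BR ` I \<union> BI ` I \<union> Ee ` I \<union> Ff ` I)"
  proof (rule set_eqI)
    fix x show "x \<in> lset n \<longleftrightarrow> x \<in> A \<union> (BR ` I \<union> BI ` I \<union> Ee ` I \<union> Ff ` I)"
      using assms by (cases x) (auto simp: A_def I_def image_iff)
  qed
  have fA: "finite A" by (simp add: A_def)
  have fI: "finite I" by (simp add: I_def)
  have "sum f (lset n) = sum f A + sum f (BR ` I \<union> BI ` I \<union> Ee ` I \<union> Ff ` I)"
    unfolding eq by (rule sum.union_disjoint) (auto simp: fA fI A_def I_def)
  also have "sum f A = f (BR 1) + f (BI 1) + f (Ee 0) + f (Ee 1) + f (Ff 0) + f (Ff 1) + f Zb"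
    by (simp add: A_def add.assoc)
  also have "sum f (BR ` I \<union> BI ` I \<union> Ee ` I \<union> Ff ` I) = sum f (BR ` I) + sum f (BI ` I) + sum f (Ee ` I) + sum f (Ff ` I)"
    using fI by (subst sum.union_disjoint, auto)+
  also have "\<dots> = (\<Sum>a\<in>I. f (BR a) + f (BI a) + f (Ee a) + f (Ff a))"
    by (simp add: sum.reindex inj_on_def sum.distrib)
  finally show ?thesis by (simp add: I_def)
qed

lemma vbr_bl: "finite S \<Longrightarrow> p \<in> S \<Longrightarrow> k \<in> S \<Longrightarrow> vbr S C (bvec p) Y k = (\<Sum>j\<in>S. Y j * C p j k)"
  unfolding vbr_def bvec_def by (simp add: delta_simps)

lemma vbr_br: "finite S \<Longrightarrow> q \<in> S \<Longrightarrow> k \<in> S \<Longrightarrow> vbr S C X (bvec q) k = (\<Sum>i\<in>S. X i * C i q k)"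
  unfolding vbr_def bvec_def by (simp add: delta_simps)

lemma mapply_bvec: "finite S \<Longrightarrow> p \<in> S \<Longrightarrow> mapply S M (bvec p) = (\<lambda>k. if k \<in> S then M k p else 0)"
  unfolding mapply_def bvec_def by (simp add: delta_simps cong: if_cong)

lemma ginner_bb: "finite S \<Longrightarrow> p \<in> S \<Longrightarrow> q \<in> S \<Longrightarrow> ginner S G (bvec p) (bvec q) = G p q"
  by (subst ginner_bvec_l) (auto simp: bvec_def delta_simps)

context conc begin

lemma lC_x_E0_E1: "i \<in> lset n \<Longrightarrow> lC i (Ee 0) (Ee 1) = (if i = BR 1 then -1 else 0)"
  by (cases i) (auto simp: lC_def lup_def dl_def)
lemma lC_x_E1_E0: "i \<in> lset n \<Longrightarrow> lC i (Ee 1) (Ee 0) = (if i = BR 1 then -1 else 0)"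
  by (cases i) (auto simp: lC_def lup_def dl_def)
lemma lC_BR1_x_E1: "j \<in> lset n \<Longrightarrow> lC (BR 1) j (Ee 1) = (if j = Ee 0 then -1 else 0)"
  by (cases j) (auto simp: lC_def lup_def dl_def)
lemma lC_BR1_x_E0: "j \<in> lset n \<Longrightarrow> lC (BR 1) j (Ee 0) = (if j = Ee 1 then -1 else 0)"
  by (cases j) (auto simp: lC_def lup_def dl_def)

lemma der_rel:
  assumes der: "is_derivation (lset n) lC M"
  shows "M (Ee 1) (Ee 1) = M (BR 1) (BR 1) + M (Ee 0) (Ee 0)"
    and "M (Ee 0) (Ee 0) = M (BR 1) (BR 1) + M (Ee 1) (Ee 1)"
proof -
  have n1: "Suc 0 \<le> n - Suc 0" using n2 by auto
  have e: "mapply (lset n) M (vbr (lset n) lC (bvec (BR 1)) (bvec (Ee 0))) (Ee 1) =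
     vbr (lset n) lC (mapply (lset n) M (bvec (BR 1))) (bvec (Ee 0)) (Ee 1) + vbr (lset n) lC (bvec (BR 1)) (mapply (lset n) M (bvec (Ee 0))) (Ee 1)"
    using der unfolding is_derivation_def by metis
  have l: "mapply (lset n) M (vbr (lset n) lC (bvec (BR 1)) (bvec (Ee 0))) (Ee 1) = - M (Ee 1) (Ee 1)"
  proof -
    have v: "vbr (lset n) lC (bvec (BR 1)) (bvec (Ee 0)) = (\<lambda>k. if k = Ee 1 then -1 else 0)"
    proof
      fix k show "vbr (lset n) lC (bvec (BR 1)) (bvec (Ee 0)) k = (if k = Ee 1 then -1 else 0)"
        using n1 by (cases "k \<in> lset n") (auto simp: vbr_bvec brk_BR1_E0 brk_BR1_E0[unfolded One_nat_def])
    qed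
    show ?thesis unfolding v using n1 by (simp add: mapply_def delta_simps)
  qed
  have r1: "vbr (lset n) lC (mapply (lset n) M (bvec (BR 1))) (bvec (Ee 0)) (Ee 1) = - M (BR 1) (BR 1)"
    using n1 by (simp add: vbr_br mapply_bvec lC_x_E0_E1 lC_x_E0_E1[unfolded One_nat_def] delta_simps cong: if_cong)
  have r2: "vbr (lset n) lC (bvec (BR 1)) (mapply (lset n) M (bvec (Ee 0))) (Ee 1) = - M (Ee 0) (Ee 0)"
    using n1 by (simp add: vbr_bl mapply_bvec lC_BR1_x_E1 lC_BR1_x_E1[unfolded One_nat_def] delta_simps cong: if_cong)
  show "M (Ee 1) (Ee 1) = M (BR 1) (BR 1) + M (Ee 0) (Ee 0)" using e l r1 r2 by simp
next
  have n1: "Suc 0 \<le> n - Suc 0" using n2 by auto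
  have e: "mapply (lset n) M (vbr (lset n) lC (bvec (BR 1)) (bvec (Ee 1))) (Ee 0) =
     vbr (lset n) lC (mapply (lset n) M (bvec (BR 1))) (bvec (Ee 1)) (Ee 0) + vbr (lset n) lC (bvec (BR 1)) (mapply (lset n) M (bvec (Ee 1))) (Ee 0)"
    using der unfolding is_derivation_def by metis
  have l: "mapply (lset n) M (vbr (lset n) lC (bvec (BR 1)) (bvec (Ee 1))) (Ee 0) = - M (Ee 0) (Ee 0)"
  proof -
    have v: "vbr (lset n) lC (bvec (BR 1)) (bvec (Ee 1)) = (\<lambda>k. if k = Ee 0 then -1 else 0)"
    proof
      fix k show "vbr (lset n) lC (bvec (BR 1)) (bvec (Ee 1)) k = (if k = Ee 0 then -1 else 0)"
        using n1 by (cases "k \<in> lset n") (auto simp: vbr_bvec brk_BR1_E1 brk_BR1_E1[unfolded One_nat_def])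
    qed
    show ?thesis unfolding v using n1 by (simp add: mapply_def delta_simps)
  qed
  have r1: "vbr (lset n) lC (mapply (lset n) M (bvec (BR 1))) (bvec (Ee 1)) (Ee 0) = - M (BR 1) (BR 1)"
    using n1 by (simp add: vbr_br mapply_bvec lC_x_E1_E0 lC_x_E1_E0[unfolded One_nat_def] delta_simps cong: if_cong)
  have r2: "vbr (lset n) lC (bvec (BR 1)) (mapply (lset n) M (bvec (Ee 1))) (Ee 0) = - M (Ee 1) (Ee 1)"
    using n1 by (simp add: vbr_bl mapply_bvec lC_BR1_x_E0 lC_BR1_x_E0[unfolded One_nat_def] delta_simps cong: if_cong)
  show "M (Ee 0) (Ee 0) = M (BR 1) (BR 1) + M (Ee 1) (Ee 1)" using e l r1 r2 by simp
qed

lemma card_I: "real (card {2..n-1}) = real n - 2"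
  using n2 by (simp add: of_nat_diff)

lemma ric00: "ricci (lset n) lC (lG \<rho> c) (bvec (Ee 0)) (bvec (Ee 0)) = (real n - 1) * c / \<rho>^2 - (\<rho>+c)/(2*(\<rho>+2*c)^2)"
proof -
  have "ricci (lset n) lC (lG \<rho> c) (bvec (Ee 0)) (bvec (Ee 0)) = (\<Sum>i\<in>lset n. Tf (Ee 0) i)"
    by (simp add: ricci_bvec Tf_def)
  also have "\<dots> = Tf (Ee 0) (BR 1) + Tf (Ee 0) (BI 1) + Tf (Ee 0) (Ee 0) + Tf (Ee 0) (Ee 1) + Tf (Ee 0) (Ff 0) + Tf (Ee 0) (Ff 1) + Tf (Ee 0) Zb
     + (\<Sum>a\<in>{2..n-1}. Tf (Ee 0) (BR a) + Tf (Ee 0) (BI a) + Tf (Ee 0) (Ee a) + Tf (Ee 0) (Ff a))"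
    by (rule sum_lset[OF n2])
  also have "(\<Sum>a\<in>{2..n-1}. Tf (Ee 0) (BR a) + Tf (Ee 0) (BI a) + Tf (Ee 0) (Ee a) + Tf (Ee 0) (Ff a))
      = (\<Sum>a\<in>{2..n-1}. 2 * (((-1/4)*\<rho> + (1/4)*c)/(\<rho>^2)) + 2 * (((1/4)*\<rho> + (1/4)*c)/(\<rho>^2)))"
    by (rule sum.cong) (auto simp: T_BRa_E0 T_BRa_E0[unfolded One_nat_def] T_BIa_E0 T_BIa_E0[unfolded One_nat_def] T_Ea_E0 T_Ea_E0[unfolded One_nat_def] T_Fa_E0 T_Fa_E0[unfolded One_nat_def])
  also have "\<dots> = (real n - 2) * (2 * (((-1/4)*\<rho> + (1/4)*c)/(\<rho>^2)) + 2 * (((1/4)*\<rho> + (1/4)*c)/(\<rho>^2)))"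
    by (simp only: sum_constant card_I)
  finally show ?thesis
    using nz by (simp add: T_BR1_E0 T_BR1_E0[unfolded One_nat_def] T_BI1_E0 T_BI1_E0[unfolded One_nat_def] T_E0_E0 T_E0_E0[unfolded One_nat_def] T_E1_E0 T_E1_E0[unfolded One_nat_def] T_F0_E0 T_F0_E0[unfolded One_nat_def] T_F1_E0 T_F1_E0[unfolded One_nat_def] T_Z_E0 T_Z_E0[unfolded One_nat_def]) (simp add: divide_simps, simp add: algebra_simps power2_eq_square)
qed

lemma ric11: "ricci (lset n) lC (lG \<rho> c) (bvec (Ee 1)) (bvec (Ee 1)) = - (\<rho>+3*c)/(2*\<rho>*(\<rho>+2*c))"
proof -
  have "ricci (lset n) lC (lG \<rho> c) (bvec (Ee 1)) (bvec (Ee 1)) = (\<Sum>i\<in>lset n. Tf (Ee 1) i)"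
    using nz by (simp add: ricci_bvec Tf_def)
  also have "\<dots> = Tf (Ee 1) (BR 1) + Tf (Ee 1) (BI 1) + Tf (Ee 1) (Ee 0) + Tf (Ee 1) (Ee 1) + Tf (Ee 1) (Ff 0) + Tf (Ee 1) (Ff 1) + Tf (Ee 1) Zb
     + (\<Sum>a\<in>{2..n-1}. Tf (Ee 1) (BR a) + Tf (Ee 1) (BI a) + Tf (Ee 1) (Ee a) + Tf (Ee 1) (Ff a))"
    by (rule sum_lset[OF n2])
  also have "(\<Sum>a\<in>{2..n-1}. Tf (Ee 1) (BR a) + Tf (Ee 1) (BI a) + Tf (Ee 1) (Ee a) + Tf (Ee 1) (Ff a)) = 0"
    by (rule sum.neutral) (auto simp: T_BRa_E1 T_BRa_E1[unfolded One_nat_def] T_BRa_E1 T_BRa_E1[unfolded One_nat_def] T_BIa_E1 T_BIa_E1[unfolded One_nat_def] T_BIa_E1 T_BIa_E1[unfolded One_nat_def] T_Ea_E1 T_Ea_E1[unfolded One_nat_def] T_Ea_E1 T_Ea_E1[unfolded One_nat_def] T_Fa_E1 T_Fa_E1[unfolded One_nat_def] T_Fa_E1 T_Fa_E1[unfolded One_nat_def])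
  finally show ?thesis
    using nz by (simp add: T_BR1_E1 T_BR1_E1[unfolded One_nat_def] T_BR1_E1 T_BR1_E1[unfolded One_nat_def] T_BI1_E1 T_BI1_E1[unfolded One_nat_def] T_BI1_E1 T_BI1_E1[unfolded One_nat_def] T_E0_E1 T_E0_E1[unfolded One_nat_def] T_E0_E1 T_E0_E1[unfolded One_nat_def] T_E1_E1 T_E1_E1[unfolded One_nat_def] T_E1_E1 T_E1_E1[unfolded One_nat_def] T_F0_E1 T_F0_E1[unfolded One_nat_def] T_F0_E1 T_F0_E1[unfolded One_nat_def] T_F1_E1 T_F1_E1[unfolded One_nat_def] T_F1_E1 T_F1_E1[unfolded One_nat_def] T_Z_E1 T_Z_E1[unfolded One_nat_def] T_Z_E1 T_Z_E1[unfolded One_nat_def]) (simp add: divide_simps, simp add: algebra_simps power2_eq_square)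
qed

lemma gM: assumes "x \<in> lset n" "x \<noteq> Zb" "x \<noteq> BI 1"
  shows "ginner (lset n) (lG \<rho> c) (mapply (lset n) M (bvec x)) (bvec x) = M x x * lG \<rho> c x x"
proof -
  have "ginner (lset n) (lG \<rho> c) (mapply (lset n) M (bvec x)) (bvec x) = (\<Sum>i\<in>lset n. (if i \<in> lset n then M i x else 0) * lG \<rho> c i x)"
    using assms by (simp add: ginner_bvec_r mapply_bvec)
  also have "\<dots> = M x x * lG \<rho> c x x"
    using assms by (subst sumG[OF assms(1) n2]) simp
  finally show ?thesis .
qed

lemma not_sol: "\<not> solvsoliton (lset n) lC (lG \<rho> c)"
proof
  assume "solvsoliton (lset n) lC (lG \<rho> c)"
  then obtain lam M where der: "is_derivation (lset n) lC M"
    and sol: "\<And>X Y. ricci (lset n) lC (lG \<rho> c) X Y = lam * ginner (lset n) (lG \<rho> c) X Y + ginner (lset n) (lG \<rho> c) (mapply (lset n) M X) Y"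
    unfolding solvsoliton_def by blast
  have m: "M (Ee 0) (Ee 0) = M (Ee 1) (Ee 1)" using der_rel[OF der] by linarith
  have n1: "Suc 0 \<le> n - Suc 0" using n2 by auto
  have s0: "ricci (lset n) lC (lG \<rho> c) (bvec (Ee 0)) (bvec (Ee 0)) = (lam + M (Ee 0) (Ee 0)) * lG \<rho> c (Ee 0) (Ee 0)"
    using sol[of "bvec (Ee 0)" "bvec (Ee 0)"] gM[of "Ee 0" M] by (simp add: ginner_bb algebra_simps)
  have s1: "ricci (lset n) lC (lG \<rho> c) (bvec (Ee 1)) (bvec (Ee 1)) = (lam + M (Ee 1) (Ee 1)) * lG \<rho> c (Ee 1) (Ee 1)"
    using sol[of "bvec (Ee 1)" "bvec (Ee 1)"] gM[of "Ee 1" M] n1 by (simp add: ginner_bb algebra_simps)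
  have E: "ricci (lset n) lC (lG \<rho> c) (bvec (Ee 0)) (bvec (Ee 0)) * lG \<rho> c (Ee 1) (Ee 1)
     = ricci (lset n) lC (lG \<rho> c) (bvec (Ee 1)) (bvec (Ee 1)) * lG \<rho> c (Ee 0) (Ee 0)"
    unfolding s0 s1 m by simp
  define N where "N = real n - 1"
  have N1: "N \<ge> 1" using n2 by (simp add: N_def)
  have E2: "(N * c / \<rho>^2 - (\<rho>+c)/(2*(\<rho>+2*c)^2)) * (1 / (4 * \<rho>)) = (- (\<rho>+3*c)/(2*\<rho>*(\<rho>+2*c))) * ((\<rho> + 2*c) / (4 * \<rho>^2))"
    using E unfolding ric00 ric11 N_def by (simp add: lG_def)
  have E3: "2 * N * c * (\<rho>+2*c)^2 + (6*\<rho>^2*c + 16*\<rho>*c^2 + 12*c^3) = 0"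
    using E2 nz by (simp add: divide_simps) (simp add: algebra_simps power2_eq_square power3_eq_cube)
  have "2 * N * c * (\<rho>+2*c)^2 + (6*\<rho>^2*c + 16*\<rho>*c^2 + 12*c^3) > 0"
    using N1 rp cp by (intro add_pos_pos mult_pos_pos) auto
  with E3 show False by simp
qed

end

theorem theorem4p13:
  fixes n :: nat and \<rho> c :: real
  assumes "n > 1" and "c > 0" and "\<rho> > 0"
  shows "\<not> solvsoliton (lset n) lC (lG \<rho> c)"
proof -
  interpret conc n \<rho> c
    by unfold_locales (use assms in auto)
  show ?thesis by (rule not_sol)
qed

end
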